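(* Let $n\in\mathbb N$ and $p_0\in PH$. Then there exists a (mild) solution $(p(t),q(t))$, $t\in[0,n]$, with $p(t)\in PH$, $q(t)\in QH$, of the system $$\frac{dp}{dt}+Ap=PF(p+q),\qquad \frac{dq}{dt}+Aq=QF(p+q),$$ satisfying the boundary conditions $p(n)=p_0$ and $q(0)=0$.
   Context: Standing assumptions: $H$ is a real Hilbert space with norm $|\cdot|$. $A$ is a linear, closed, unbounded, positive self-adjoint operator on $H$ with compact inverse, so $H$ has an orthonormal basis of eigenvectors of $A$ with eigenvalues $0<\lambda_1<\lambda_2\le\cdots\le\lambda_N<\lambda_{N+1}\le\cdots\to\infty$ (counted with multiplicity). $F:H\to H$ satisfies $|F(u)|\le K_0$ and $|F(u)-F(v)|\le K_1|u-v|$ for all $u,v\in H$, with constants $K_0,K_1>0$ and $K_1<\lambda_{N+1}$; moreover there is $R>0$ with $F(u)=0$ whenever $|u|\ge R$. $P$ is the orthogonal (spectral) projection onto the span of the first $N$ eigenvectors of $A$, and $Q=I-P$; every $u\in H$ is written $u=p+q$ with $p=Pu\in PH$, $q=Qu\in QH$. A solution on an interval $[t_0,t_1]$ means a continuous function satisfying the variation of constants formula $u(t)=e^{-A(t-s)}u(s)+\int_s^t e^{-A(t-\tau)}F(u(\tau))\,d\tau$ for $t_0\le s\le t\le t_1$ (equivalently the corresponding formulas for the $P$- and $Q$-components). *)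

theory Defs
  imports "HOL-Analysis.Analysis"
begin

text \<open>The operator A is represented through its spectral data: an orthonormal
basis e of eigenvectors (e k has eigenvalue lam k; index k corresponds to
the paper's index k+1).\<close>

definition Pproj :: "(nat \<Rightarrow> 'a::real_inner) \<Rightarrow> nat \<Rightarrow> 'a \<Rightarrow> 'a" where
  "Pproj e N u = (\<Sum>k<N. (u \<bullet> e k) *\<^sub>R e k)"

definition Qproj :: "(nat \<Rightarrow> 'a::real_inner) \<Rightarrow> nat \<Rightarrow> 'a \<Rightarrow> 'a" where
  "Qproj e N u = u - Pproj e N u"

text \<open>The analytic semigroup exp(-A t) applied to u (used for t \<ge> 0).\<close>
definition semigrp :: "(nat \<Rightarrow> 'a::{real_inner,complete_space}) \<Rightarrow> (nat \<Rightarrow> real) \<Rightarrow> real \<Rightarrow> 'a \<Rightarrow> 'a" where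
  "semigrp e lam t u = (\<Sum>k. (exp (- lam k * t) * (u \<bullet> e k)) *\<^sub>R e k)"

end

theory Submission
  imports Defs "HOL-Homology.Homology"
begin

lemma span_repr:
  fixes e :: "nat \<Rightarrow> 'a::real_inner"
  assumes orth: "\<forall>j k. e j \<bullet> e k = (if j = k then 1 else 0)"
    and v: "v \<in> span (e ` {..<N})"
  shows "v = (\<Sum>i<N. (v \<bullet> e i) *\<^sub>R e i)"
proof (rule span_induct[OF v])
  fix x assume "x \<in> e ` {..<N}"
  then obtain k where k: "k < N" "x = e k" by auto
  have "(\<Sum>i<N. (x \<bullet> e i) *\<^sub>R e i) = (\<Sum>i<N. (if i = k then e k else 0))"
    using orth k by (intro sum.cong) auto
  also have "\<dots> = e k" using k by simp
  finally show "x = (\<Sum>i<N. (x \<bullet> e i) *\<^sub>R e i)" using k by simp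
next
  have lin: "linear (\<lambda>v. v - (\<Sum>i<N. (v \<bullet> e i) *\<^sub>R e i))"
    by (rule linearI) (simp_all add: inner_add_left scaleR_add_left sum.distrib scaleR_right.sum scaleR_diff_right)
  have "subspace {v. v - (\<Sum>i<N. (v \<bullet> e i) *\<^sub>R e i) = 0}"
    using linear_subspace_kernel[OF lin] by simp
  then show "subspace {v. v = (\<Sum>i<N. (v \<bullet> e i) *\<^sub>R e i)}" by simp
qed

lemma norm_sum_orth:
  fixes e :: "nat \<Rightarrow> 'a::real_inner"
  assumes orth: "\<forall>j k. e j \<bullet> e k = (if j = k then 1 else 0)" and "finite A"
  shows "(norm (\<Sum>i\<in>A. a i *\<^sub>R e i))\<^sup>2 = (\<Sum>i\<in>A. (a i)\<^sup>2)"
proof -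
  have "(norm (\<Sum>i\<in>A. a i *\<^sub>R e i))\<^sup>2 = (\<Sum>i\<in>A. a i *\<^sub>R e i) \<bullet> (\<Sum>i\<in>A. a i *\<^sub>R e i)"
    by (simp add: power2_norm_eq_inner)
  then show ?thesis
    by (simp add: inner_sum_left inner_sum_right orth assms(2) power2_eq_square if_distrib cong: if_cong)
qed

lemma not_contractible_span_sphere:
  fixes e :: "nat \<Rightarrow> 'a::real_inner"
  assumes orth: "\<forall>j k. e j \<bullet> e k = (if j = k then 1 else 0)" and N: "1 \<le> N"
  shows "\<not> contractible (span (e ` {..<N}) \<inter> sphere 0 1)"
proof
  assume con: "contractible (span (e ` {..<N}) \<inter> sphere 0 1)"
  define V where "V = span (e ` {..<N})"
  define h where "h = (\<lambda>x::nat\<Rightarrow>real. \<Sum>i<N. x i *\<^sub>R e i)"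
  define g where "g = (\<lambda>v i. if i < N then v \<bullet> e i else (0::real))"
  have coef: "h x \<bullet> e k = x k" if "k < N" for x k
    using that by (simp add: h_def inner_sum_left orth if_distrib cong: if_cong)
  have hm: "homeomorphic_maps (Euclidean_space N) (top_of_set V) h g"
    unfolding homeomorphic_maps_def
  proof (intro conjI)
    have *: "continuous_map euclidean (top_of_set V) h"
      unfolding h_def V_def by (rule continuous_map_span_sum) auto
    show "continuous_map (Euclidean_space N) (top_of_set V) h"
      unfolding Euclidean_space_def
      by (rule continuous_map_from_subtopology) (simp add: euclidean_product_topology *)
    have "continuous_map (top_of_set V) euclideanreal (\<lambda>v. g v k)" for k
    proof (cases "k < N")
      case True
      then show ?thesis by (simp add: g_def continuous_on_inner continuous_on_id continuous_on_const)
    next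
      case False
      then show ?thesis by (simp add: g_def)
    qed
    then show "continuous_map (top_of_set V) (Euclidean_space N) g"
      unfolding Euclidean_space_def
      by (auto simp: continuous_map_in_subtopology continuous_map_componentwise_UNIV g_def)
    show "\<forall>x\<in>topspace (Euclidean_space N). g (h x) = x"
      by (auto simp: topspace_Euclidean_space g_def coef)
    show "\<forall>y\<in>topspace (top_of_set V). h (g y) = y"
      using span_repr[OF orth] by (auto simp: V_def h_def g_def)
  qed
  have "homeomorphic_maps (nsphere (N - 1)) (subtopology (top_of_set V) (sphere 0 1)) h g"
    unfolding nsphere_def
  proof (rule homeomorphic_maps_subtopologies_alt)
    show "homeomorphic_maps (Euclidean_space (Suc (N - 1))) (top_of_set V) h g"
      using hm N by simp
    show "h ` (topspace (Euclidean_space (Suc (N - 1))) \<inter> {x::nat\<Rightarrow>real. (\<Sum>i\<le>N - 1. (x i)\<^sup>2) = 1}) \<subseteq> sphere 0 1"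
    proof (rule image_subsetI)
      fix x :: "nat \<Rightarrow> real" assume "x \<in> topspace (Euclidean_space (Suc (N - 1))) \<inter> {x::nat\<Rightarrow>real. (\<Sum>i\<le>N - 1. (x i)\<^sup>2) = 1}"
      then have "(\<Sum>i\<le>N - 1. (x i)\<^sup>2) = 1" by simp
      moreover have "{..N-1} = {..<N}" using N by auto
      ultimately have "(norm (h x))\<^sup>2 = 1"
        unfolding h_def by (simp add: norm_sum_orth[OF orth])
      then show "h x \<in> sphere 0 1" by (simp add: power2_eq_1_iff) (smt (verit) norm_ge_zero)
    qed
    show "g ` (topspace (top_of_set V) \<inter> sphere 0 1) \<subseteq> {x::nat\<Rightarrow>real. (\<Sum>i\<le>N - 1. (x i)\<^sup>2) = 1}"
    proof (rule image_subsetI)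
      fix v :: 'a assume "v \<in> topspace (top_of_set V) \<inter> sphere 0 1"
      then have v: "v \<in> V" "norm v = 1" by auto
      have "{..N-1} = {..<N}" using N by auto
      then have "(\<Sum>i\<le>N - 1. (g v i)\<^sup>2) = (\<Sum>i<N. (v \<bullet> e i)\<^sup>2)" by (simp add: g_def)
      also have "\<dots> = (norm (\<Sum>i<N. (v \<bullet> e i) *\<^sub>R e i))\<^sup>2" by (simp add: norm_sum_orth[OF orth])
      also have "\<dots> = 1" using span_repr[OF orth, of v N] v by (simp add: V_def)
      finally show "g v \<in> {x::nat\<Rightarrow>real. (\<Sum>i\<le>N - 1. (x i)\<^sup>2) = 1}" by simp
    qed
  qed
  then have "nsphere (N - 1) homeomorphic_space top_of_set (V \<inter> sphere 0 1)"
    by (auto simp: homeomorphic_space_def subtopology_subtopology)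
  then have "contractible_space (nsphere (N - 1))"
    using homeomorphic_space_contractibility[of "nsphere (N - 1)" "top_of_set (V \<inter> sphere 0 1)"] con
    by (simp add: V_def)
  then show False using non_contractible_space_nsphere by blast
qed

lemma brouwer_span:
  fixes e :: "nat \<Rightarrow> 'a::real_inner"
  assumes orth: "\<forall>j k. e j \<bullet> e k = (if j = k then 1 else 0)" and N: "1 \<le> N"
    and cf: "continuous_on (span (e ` {..<N}) \<inter> cball 0 1) f"
    and fD: "f \<in> (span (e ` {..<N}) \<inter> cball 0 1) \<rightarrow> (span (e ` {..<N}) \<inter> cball 0 1)"
  shows "\<exists>x\<in>span (e ` {..<N}) \<inter> cball 0 1. f x = x"
proof (rule ccontr)
  assume nofix: "\<not> ?thesis"
  define V where "V = span (e ` {..<N})"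
  define D where "D = V \<inter> cball 0 1"
  define S where "S = V \<inter> sphere (0::'a) 1"
  have SD: "S \<subseteq> D" by (auto simp: S_def D_def)
  have ne: "x - f x \<noteq> 0" if "x \<in> D" for x proof - have "f x \<noteq> x" using nofix that unfolding D_def V_def by blast then show ?thesis by simp qed
  define gg where "gg = (\<lambda>x. inverse (norm (x - f x)) *\<^sub>R (x - f x))"
  have cgg: "continuous_on D gg"
    unfolding gg_def using ne cf
    by (intro continuous_intros) (auto simp: D_def V_def)
  have fV: "f x \<in> V" "norm (f x) \<le> 1" if "x \<in> D" for x using fD that by (auto simp: D_def V_def)
  have ggS: "gg x \<in> S" if "x \<in> D" for x
  proof -
    have "x \<in> V" using that by (auto simp: D_def)
    then have "gg x \<in> V" unfolding gg_def V_def using fV[OF that]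
      by (intro span_mul span_diff) (auto simp: V_def)
    moreover have "norm (gg x) = 1" using ne[OF that] by (simp add: gg_def)
    ultimately show ?thesis by (simp add: S_def)
  qed
  have "convex D" unfolding D_def V_def by (intro convex_Int subspace_imp_convex subspace_span convex_cball)
  then have "contractible D" by (rule convex_imp_contractible)
  then obtain c where hc: "homotopic_with_canon (\<lambda>h. True) D S gg (\<lambda>x. c)"
    using nullhomotopic_from_contractible[OF cgg] ggS by blast
  then have hc': "homotopic_with_canon (\<lambda>h. True) S S gg (\<lambda>x. c)"
    using homotopic_with_subset_left SD by blast
  have lin: "homotopic_with_canon (\<lambda>h. True) S (V - {0}) id gg"
  proof (rule homotopic_with_linear)
    show "continuous_on S id" by (simp add: continuous_on_id)
    show "continuous_on S gg" using cgg SD continuous_on_subset by blast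
    fix x assume xS: "x \<in> S"
    then have xD: "x \<in> D" and xV: "x \<in> V" and nx: "norm x = 1" using SD by (auto simp: S_def)
    have xg: "x \<bullet> gg x \<ge> 0"
    proof -
      have "x \<bullet> f x \<le> norm x * norm (f x)" by (rule norm_cauchy_schwarz)
      also have "\<dots> \<le> 1" using nx fV[OF xD] by simp
      finally have "0 \<le> x \<bullet> (x - f x)" using nx by (simp add: inner_diff_right dot_square_norm)
      then show ?thesis by (simp add: gg_def)
    qed
    show "closed_segment (id x) (gg x) \<subseteq> V - {0}"
    proof
      fix y assume "y \<in> closed_segment (id x) (gg x)"
      then obtain u where u: "0 \<le> u" "u \<le> 1" "y = (1 - u) *\<^sub>R x + u *\<^sub>R gg x"
        by (auto simp: in_segment)
      have "y \<in> V" using u xV ggS[OF xD] unfolding V_def S_def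
        by (auto intro!: span_add span_mul simp: V_def)
      moreover have "y \<noteq> 0"
      proof (cases "u = 1")
        case True
        then show ?thesis using u ggS[OF xD] by (auto simp: S_def)
      next
        case False
        have "x \<bullet> y = (1 - u) * (x \<bullet> x) + u * (x \<bullet> gg x)" using u by (simp add: inner_add_right)
        also have "\<dots> > 0" using False u xg nx by (simp add: dot_square_norm) (smt (verit) mult_nonneg_nonneg)
        finally show ?thesis by auto
      qed
      ultimately show "y \<in> V - {0}" by simp
    qed
  qed
  define r where "r = (\<lambda>y::'a. inverse (norm y) *\<^sub>R y)"
  have "homotopic_with_canon (\<lambda>h. True) S S (r \<circ> id) (r \<circ> gg)"
  proof (rule homotopic_with_compose_continuous_left)
    show "homotopic_with_canon (\<lambda>f. True) S (V - {0}) id gg" using lin by simp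
    show "continuous_on (V - {0}) r" unfolding r_def by (intro continuous_intros) auto
    show "r \<in> V - {0} \<rightarrow> S" unfolding r_def S_def V_def
      by (auto intro: span_mul)
  qed
  then have "homotopic_with_canon (\<lambda>h. True) S S id gg"
  proof (rule homotopic_with_eq)
    fix x assume "x \<in> topspace (top_of_set S)"
    then have xS: "x \<in> S" by simp
    then show "id x = (r \<circ> id) x" by (auto simp: r_def S_def)
    have "norm (gg x) = 1" using ggS xS SD by (auto simp: S_def)
    then show "gg x = (r \<circ> gg) x" by (simp add: r_def)
  qed auto
  then have "homotopic_with_canon (\<lambda>h. True) S S id (\<lambda>x. c)"
    using hc' homotopic_with_trans by blast
  then have "contractible S" by (auto simp: contractible_def)
  then show False using not_contractible_span_sphere[OF orth N] by (simp add: S_def V_def)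
qed

locale hb =
  fixes e :: "nat \<Rightarrow> 'a::{real_inner,banach}"
  assumes orth: "\<forall>j k. e j \<bullet> e k = (if j = k then 1 else 0)"
    and basis: "\<forall>u. (\<lambda>k. (u \<bullet> e k) *\<^sub>R e k) sums u"
begin

lemma coef_sums: "(\<lambda>k. (u \<bullet> e k)\<^sup>2) sums (norm u)\<^sup>2"
proof -
  have "(\<lambda>k. u \<bullet> ((u \<bullet> e k) *\<^sub>R e k)) sums (u \<bullet> u)"
    using bounded_linear.sums[OF bounded_linear_inner_right basis[rule_format, of u]] .
  then have "(\<lambda>k. (u \<bullet> e k)\<^sup>2) sums (u \<bullet> u)" by (simp add: power2_eq_square)
  then show ?thesis by (simp add: dot_square_norm)
qed

lemma coef_ext: assumes "\<And>k. v \<bullet> e k = w \<bullet> e k" shows "v = w"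
proof -
  have "(\<lambda>k. (w \<bullet> e k) *\<^sub>R e k) sums v" using basis[rule_format, of v] assms by simp
  moreover have "(\<lambda>k. (w \<bullet> e k) *\<^sub>R e k) sums w" using basis by blast
  ultimately show ?thesis by (rule sums_unique2)
qed

definition mult :: "(nat \<Rightarrow> real) \<Rightarrow> 'a \<Rightarrow> 'a" where
  "mult a u = suminf (\<lambda>k. (a k * (u \<bullet> e k)) *\<^sub>R e k)"

lemma mult_summable:
  assumes a: "\<And>k. \<bar>a k\<bar> \<le> C"
  shows "summable (\<lambda>k. (a k * (u \<bullet> e k)) *\<^sub>R e k)"
proof (rule summable_Cauchy[THEN iffD2], intro allI impI)
  fix \<epsilon> :: real assume \<epsilon>: "\<epsilon> > 0"
  have C0: "C \<ge> 0" using a[of 0] by simp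
  define \<delta> where "\<delta> = \<epsilon>\<^sup>2 / (C\<^sup>2 + 1)"
  have \<delta>: "\<delta> > 0" unfolding \<delta>_def using \<epsilon> by (intro divide_pos_pos) (auto intro: add_nonneg_pos)
  have "summable (\<lambda>k. (u \<bullet> e k)\<^sup>2)" using coef_sums sums_summable by blast
  then obtain M where M: "\<forall>m\<ge>M. \<forall>n. norm (sum (\<lambda>k. (u \<bullet> e k)\<^sup>2) {m..<n}) < \<delta>"
    using \<delta> unfolding summable_Cauchy by blast
  show "\<exists>M. \<forall>m\<ge>M. \<forall>n. norm (sum (\<lambda>k. (a k * (u \<bullet> e k)) *\<^sub>R e k) {m..<n}) < \<epsilon>"
  proof (intro exI allI impI)
    fix m n assume "M \<le> m"
    then have h: "(\<Sum>k=m..<n. (u \<bullet> e k)\<^sup>2) < \<delta>" using M by (auto simp: abs_less_iff)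
    have "(norm (sum (\<lambda>k. (a k * (u \<bullet> e k)) *\<^sub>R e k) {m..<n}))\<^sup>2 = (\<Sum>k=m..<n. (a k * (u \<bullet> e k))\<^sup>2)"
      by (rule norm_sum_orth[OF orth]) simp
    also have "\<dots> \<le> (\<Sum>k=m..<n. C\<^sup>2 * (u \<bullet> e k)\<^sup>2)"
    proof (intro sum_mono)
      fix k
      have "\<bar>a k * (u \<bullet> e k)\<bar> \<le> C * \<bar>u \<bullet> e k\<bar>" using a[of k] by (simp add: abs_mult mult_right_mono)
      then have "\<bar>a k * (u \<bullet> e k)\<bar>\<^sup>2 \<le> (C * \<bar>u \<bullet> e k\<bar>)\<^sup>2" by (intro power_mono) auto
      then show "(a k * (u \<bullet> e k))\<^sup>2 \<le> C\<^sup>2 * (u \<bullet> e k)\<^sup>2" by (simp add: power_mult_distrib)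
    qed
    also have "\<dots> = C\<^sup>2 * (\<Sum>k=m..<n. (u \<bullet> e k)\<^sup>2)" by (simp add: sum_distrib_left)
    also have "\<dots> \<le> C\<^sup>2 * \<delta>" using h by (intro mult_left_mono) auto
    also have "\<dots> < \<epsilon>\<^sup>2"
    proof -
      have p: "C\<^sup>2 + 1 > 0" by (auto intro: add_nonneg_pos)
      have "C\<^sup>2 * \<epsilon>\<^sup>2 < \<epsilon>\<^sup>2 * (C\<^sup>2 + 1)" using \<epsilon> by (simp add: algebra_simps)
      then have "(C\<^sup>2 * \<epsilon>\<^sup>2) / (C\<^sup>2 + 1) < \<epsilon>\<^sup>2" using p by (simp add: pos_divide_less_eq)
      then show ?thesis by (simp add: \<delta>_def)
    qed
    finally show "norm (sum (\<lambda>k. (a k * (u \<bullet> e k)) *\<^sub>R e k) {m..<n}) < \<epsilon>"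
      using \<epsilon> by (meson norm_ge_zero power_less_imp_less_base less_imp_le)
  qed
qed

lemma mult_coef:
  assumes a: "\<And>k. \<bar>a k\<bar> \<le> C"
  shows "mult a u \<bullet> e j = a j * (u \<bullet> e j)"
proof -
  have "(\<lambda>k. ((a k * (u \<bullet> e k)) *\<^sub>R e k) \<bullet> e j) sums (mult a u \<bullet> e j)"
    unfolding mult_def
    by (rule bounded_linear.sums[OF bounded_linear_inner_left summable_sums[OF mult_summable[OF a]]])
  moreover have "(\<lambda>k. ((a k * (u \<bullet> e k)) *\<^sub>R e k) \<bullet> e j) = (\<lambda>k. if k = j then a k * (u \<bullet> e k) else 0)"
  proof
    fix k show "((a k * (u \<bullet> e k)) *\<^sub>R e k) \<bullet> e j = (if k = j then a k * (u \<bullet> e k) else 0)"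
      using orth by (cases "k = j") simp_all
  qed
  ultimately have "(\<lambda>k. if k = j then a k * (u \<bullet> e k) else 0) sums (mult a u \<bullet> e j)" by simp
  then show ?thesis using sums_single[of j "\<lambda>k. a k * (u \<bullet> e k)"] sums_unique2 by blast
qed

lemma norm_le_coef:
  assumes C: "C \<ge> 0" and le: "\<And>k. \<bar>v \<bullet> e k\<bar> \<le> C * \<bar>u \<bullet> e k\<bar>"
  shows "norm v \<le> C * norm u"
proof -
  have k: "(v \<bullet> e k)\<^sup>2 \<le> C\<^sup>2 * (u \<bullet> e k)\<^sup>2" for k
  proof -
    have "\<bar>v \<bullet> e k\<bar>\<^sup>2 \<le> (C * \<bar>u \<bullet> e k\<bar>)\<^sup>2" using le[of k] by (intro power_mono) auto
    then show ?thesis by (simp add: power_mult_distrib)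
  qed
  have s1: "(\<lambda>k. (v \<bullet> e k)\<^sup>2) sums (norm v)\<^sup>2" by (rule coef_sums)
  have s2: "(\<lambda>k. C\<^sup>2 * (u \<bullet> e k)\<^sup>2) sums (C\<^sup>2 * (norm u)\<^sup>2)" by (rule sums_mult[OF coef_sums])
  have "(norm v)\<^sup>2 \<le> C\<^sup>2 * (norm u)\<^sup>2" using sums_le[OF k s1 s2] .
  then have "(norm v)\<^sup>2 \<le> (C * norm u)\<^sup>2" by (simp add: power_mult_distrib)
  then show ?thesis using power2_le_imp_le[OF _ mult_nonneg_nonneg[OF C norm_ge_zero]] by blast
qed

lemma mult_norm:
  assumes a: "\<And>k. \<bar>a k\<bar> \<le> C"
  shows "norm (mult a u) \<le> C * norm u"
proof (rule norm_le_coef)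
  show "C \<ge> 0" using a[of 0] by simp
  fix k show "\<bar>mult a u \<bullet> e k\<bar> \<le> C * \<bar>u \<bullet> e k\<bar>"
    using a[of k] by (simp add: mult_coef[OF a] abs_mult mult_right_mono)
qed

end

locale hb2 = hb e for e :: "nat \<Rightarrow> 'a::{real_inner,banach}" +
  fixes lam :: "nat \<Rightarrow> real" and N :: nat
  assumes lam_pos: "\<And>k. 0 < lam k"
begin

abbreviation S where "S t u \<equiv> semigrp e lam t u"
abbreviation P where "P \<equiv> Pproj e N"
abbreviation Q where "Q \<equiv> Qproj e N"

lemma exp_bnd: "t \<ge> 0 \<Longrightarrow> \<bar>exp (- lam k * t)\<bar> \<le> 1"
  using lam_pos[of k] by (simp add: mult_nonneg_nonneg less_imp_le)

lemma S_mult: "S t u = mult (\<lambda>k. exp (- lam k * t)) u"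
  by (simp add: semigrp_def mult_def)

lemma S_coef: "t \<ge> 0 \<Longrightarrow> S t u \<bullet> e j = exp (- lam j * t) * (u \<bullet> e j)"
  unfolding S_mult by (rule mult_coef[OF exp_bnd])

lemma S_norm: assumes "t \<ge> 0" shows "norm (S t u) \<le> norm u"
  unfolding S_mult using mult_norm[of "\<lambda>k. exp (- lam k * t)" 1 u] exp_bnd[OF assms] by simp

lemma orth': "e j \<bullet> e k = (if j = k then 1 else 0)" using orth by blast

lemma S_add: "t \<ge> 0 \<Longrightarrow> S t (u + v) = S t u + S t v"
  by (rule coef_ext) (simp add: S_coef inner_add_left algebra_simps)

lemma S_scale: "t \<ge> 0 \<Longrightarrow> S t (c *\<^sub>R u) = c *\<^sub>R S t u"
  by (rule coef_ext) (simp add: S_coef)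

lemma S_bl: "t \<ge> 0 \<Longrightarrow> bounded_linear (S t)"
proof (rule bounded_linear_intro[where K=1])
  assume "t \<ge> 0"
  then show "\<And>x y. S t (x + y) = S t x + S t y" "\<And>r x. S t (r *\<^sub>R x) = r *\<^sub>R S t x" "\<And>x. norm (S t x) \<le> norm x * 1"
    using S_add S_scale S_norm by auto
qed

lemma S_diff: "t \<ge> 0 \<Longrightarrow> S t (u - v) = S t u - S t v"
  using linear_diff[OF bounded_linear.linear[OF S_bl]] by blast

lemma S_zero: "S t 0 = 0"
  by (simp add: semigrp_def)

lemma S_0: "S 0 u = u"
  by (rule coef_ext) (simp add: S_coef)

lemma S_comp: "s \<ge> 0 \<Longrightarrow> t \<ge> 0 \<Longrightarrow> S t (S s u) = S (t + s) u"
  by (rule coef_ext) (simp add: S_coef algebra_simps exp_add[symmetric])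

lemma P_coef: "P u \<bullet> e j = (if j < N then u \<bullet> e j else 0)"
  by (simp add: Pproj_def inner_sum_left orth' if_distrib cong: if_cong)

lemma Q_coef: "Q u \<bullet> e j = (if j < N then 0 else u \<bullet> e j)"
  by (simp add: Qproj_def inner_diff_left P_coef)

lemma P_bl: "bounded_linear P"
  unfolding Pproj_def
  by (intro bounded_linear_sum bounded_linear_compose[OF bounded_linear_scaleR_left bounded_linear_inner_left])

lemma Q_bl: "bounded_linear Q"
  unfolding Qproj_def by (intro bounded_linear_sub[OF bounded_linear_ident P_bl])

lemma P_S: "t \<ge> 0 \<Longrightarrow> P (S t u) = S t (P u)"
  by (rule coef_ext) (simp add: S_coef P_coef)

lemma Q_S: "t \<ge> 0 \<Longrightarrow> Q (S t u) = S t (Q u)"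
  by (rule coef_ext) (simp add: S_coef Q_coef)

lemma range_P: "range P = {v. \<forall>j\<ge>N. v \<bullet> e j = 0}"
proof
  show "range P \<subseteq> {v. \<forall>j\<ge>N. v \<bullet> e j = 0}" by (auto simp: P_coef)
  show "{v. \<forall>j\<ge>N. v \<bullet> e j = 0} \<subseteq> range P"
  proof
    fix v assume "v \<in> {v. \<forall>j\<ge>N. v \<bullet> e j = 0}"
    then have "v = P v" by (intro coef_ext) (auto simp: P_coef)
    then show "v \<in> range P" by blast
  qed
qed

lemma range_Q: "range Q = {v. \<forall>j<N. v \<bullet> e j = 0}"
proof
  show "range Q \<subseteq> {v. \<forall>j<N. v \<bullet> e j = 0}" by (auto simp: Q_coef)
  show "{v. \<forall>j<N. v \<bullet> e j = 0} \<subseteq> range Q"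
  proof
    fix v assume "v \<in> {v. \<forall>j<N. v \<bullet> e j = 0}"
    then have "v = Q v" by (intro coef_ext) (auto simp: Q_coef)
    then show "v \<in> range Q" by blast
  qed
qed

lemma S_cont: "continuous_on {0..} (\<lambda>t. S t u)"
  unfolding continuous_on_def
proof (intro ballI)
  fix s :: real assume "s \<in> {0..}"
  then have s: "s \<ge> 0" by simp
  define \<phi> where "\<phi> = (\<lambda>t. suminf (\<lambda>k. ((exp (- lam k * t) - exp (- lam k * s)) * (u \<bullet> e k))\<^sup>2))"
  have eq: "(norm (S t u - S s u))\<^sup>2 = \<phi> t" if "t \<ge> 0" for t
  proof -
    have "(\<lambda>k. ((S t u - S s u) \<bullet> e k)\<^sup>2) sums (norm (S t u - S s u))\<^sup>2" by (rule coef_sums)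
    then show ?thesis using that s
      by (simp add: \<phi>_def inner_diff_left S_coef algebra_simps sums_iff)
  qed
  have b: "norm (((exp (- lam k * t) - exp (- lam k * s)) * (u \<bullet> e k))\<^sup>2) \<le> (u \<bullet> e k)\<^sup>2"
    if "t \<in> {0..}" for k t
  proof -
    have "\<bar>exp (- lam k * t) - exp (- lam k * s)\<bar> \<le> 1"
    proof -
      have t: "t \<ge> 0" using that by simp
      have "exp (- lam k * t) \<le> 1" "exp (- lam k * s) \<le> 1" using exp_bnd[OF t, of k] exp_bnd[OF s, of k] by auto
      moreover have "0 < exp (- lam k * t)" "0 < exp (- lam k * s)" by auto
      ultimately show ?thesis unfolding abs_le_iff by linarith
    qed
    then have "\<bar>exp (- lam k * t) - exp (- lam k * s)\<bar>\<^sup>2 \<le> 1" by (intro power_le_one) auto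
    then show ?thesis by (simp add: power_mult_distrib mult_left_le_one_le)
  qed
  have "summable (\<lambda>k. (u \<bullet> e k)\<^sup>2)" using coef_sums sums_summable by blast
  then have ul: "uniform_limit {0..} (\<lambda>n t. \<Sum>k<n. ((exp (- lam k * t) - exp (- lam k * s)) * (u \<bullet> e k))\<^sup>2) \<phi> sequentially"
    unfolding \<phi>_def by (intro Weierstrass_m_test[OF b]) auto
  have "continuous_on {0..} \<phi>"
    by (rule uniform_limit_theorem[OF _ ul]) (auto intro!: always_eventually continuous_intros)
  then have "(\<phi> \<longlongrightarrow> \<phi> s) (at s within {0..})" using s by (simp add: continuous_on_def)
  moreover have "\<phi> s = 0" using eq[OF s] by simp
  ultimately have "((\<lambda>t. sqrt (\<phi> t)) \<longlongrightarrow> sqrt 0) (at s within {0..})" by (intro tendsto_intros) simp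
  then have l0: "((\<lambda>t. sqrt (\<phi> t)) \<longlongrightarrow> 0) (at s within {0..})" by simp
  have "\<forall>\<^sub>F t in at s within {0..}. sqrt (\<phi> t) = norm (S t u - S s u)"
    unfolding eventually_at_filter
    by (intro always_eventually) (auto simp: eq[symmetric])
  with l0 have "((\<lambda>t. norm (S t u - S s u)) \<longlongrightarrow> 0) (at s within {0..})"
    by (rule Lim_transform_eventually)
  then show "((\<lambda>t. S t u) \<longlongrightarrow> S s u) (at s within {0..})"
    by (simp add: tendsto_norm_zero_iff LIM_zero_iff)
qed

end

context hb2 begin

lemma S_cont_shift:
  assumes "b \<le> t"
  shows "continuous_on {a..b} (\<lambda>\<tau>. S (t - \<tau>) w)"
proof -
  have "continuous_on {a..b} (\<lambda>\<tau>. t - \<tau>)" by (intro continuous_intros)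
  moreover have "(\<lambda>\<tau>. t - \<tau>) ` {a..b} \<subseteq> {0..}" using assms by auto
  ultimately show ?thesis using continuous_on_compose2[OF S_cont[of w]] by blast
qed

lemma cont_Sv:
  assumes cv: "continuous_on {a..b} v" and tb: "b \<le> t"
  shows "continuous_on {a..b} (\<lambda>\<tau>. S (t - \<tau>) (v \<tau>))"
  unfolding continuous_on_def
proof
  fix x assume x: "x \<in> {a..b}"
  have c1: "((\<lambda>\<tau>. S (t - \<tau>) (v x)) \<longlongrightarrow> S (t - x) (v x)) (at x within {a..b})"
    using S_cont_shift[OF tb, of a "v x"] x by (simp add: continuous_on_def)
  have "((\<lambda>\<tau>. v \<tau> - v x) \<longlongrightarrow> 0) (at x within {a..b})"
    using cv x by (simp add: continuous_on_def LIM_zero)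
  then have n0: "((\<lambda>\<tau>. norm (v \<tau> - v x)) \<longlongrightarrow> 0) (at x within {a..b})"
    by (simp add: tendsto_norm_zero_iff)
  have c2: "((\<lambda>\<tau>. S (t - \<tau>) (v \<tau> - v x)) \<longlongrightarrow> 0) (at x within {a..b})"
  proof (rule Lim_null_comparison[OF _ n0])
    show "\<forall>\<^sub>F \<tau> in at x within {a..b}. norm (S (t - \<tau>) (v \<tau> - v x)) \<le> norm (v \<tau> - v x)"
      unfolding eventually_at_filter
      by (intro always_eventually) (use tb in \<open>auto intro!: S_norm\<close>)
  qed
  have "((\<lambda>\<tau>. S (t - \<tau>) (v \<tau> - v x) + S (t - \<tau>) (v x)) \<longlongrightarrow> 0 + S (t - x) (v x)) (at x within {a..b})"
    by (rule tendsto_add[OF c2 c1])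
  moreover have "\<forall>\<^sub>F \<tau> in at x within {a..b}. S (t - \<tau>) (v \<tau> - v x) + S (t - \<tau>) (v x) = S (t - \<tau>) (v \<tau>)"
    unfolding eventually_at_filter
    by (intro always_eventually) (use tb in \<open>auto simp: S_diff\<close>)
  ultimately show "((\<lambda>\<tau>. S (t - \<tau>) (v \<tau>)) \<longlongrightarrow> S (t - x) (v x)) (at x within {a..b})"
    using Lim_transform_eventually by fastforce
qed

definition conv :: "(real \<Rightarrow> 'a) \<Rightarrow> real \<Rightarrow> 'a" where
  "conv g t = integral {0..t} (\<lambda>\<tau>. S (t - \<tau>) (g \<tau>))"

lemma conv_has_integral:
  assumes "continuous_on {0..t} g"
  shows "((\<lambda>\<tau>. S (t - \<tau>) (g \<tau>)) has_integral conv g t) {0..t}"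
  unfolding conv_def
  by (intro integrable_integral integrable_continuous_interval cont_Sv[OF assms]) simp

lemma conv_split:
  assumes g: "continuous_on {0..t} g" and s: "0 \<le> s" "s \<le> t"
  shows "((\<lambda>\<tau>. S (t - \<tau>) (g \<tau>)) has_integral (conv g t - S (t - s) (conv g s))) {s..t}"
proof -
  have g1: "continuous_on {0..s} g" using g s by (auto intro: continuous_on_subset)
  have g2: "continuous_on {s..t} g" using g s by (auto intro: continuous_on_subset)
  have A: "((\<lambda>\<tau>. S (t - s) (S (s - \<tau>) (g \<tau>))) has_integral S (t - s) (conv g s)) {0..s}"
    using has_integral_linear[OF conv_has_integral[OF g1] S_bl[of "t - s"]] s by (simp add: o_def)
  have A': "((\<lambda>\<tau>. S (t - \<tau>) (g \<tau>)) has_integral S (t - s) (conv g s)) {0..s}"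
    using A by (rule has_integral_eq[rotated]) (use s in \<open>auto simp: S_comp\<close>)
  obtain J where J: "((\<lambda>\<tau>. S (t - \<tau>) (g \<tau>)) has_integral J) {s..t}"
    using integrable_continuous_interval[OF cont_Sv[OF g2, of t]] by auto
  have "((\<lambda>\<tau>. S (t - \<tau>) (g \<tau>)) has_integral (S (t - s) (conv g s) + J)) {0..t}"
    by (rule has_integral_combine[OF s A' J])
  then have "conv g t = S (t - s) (conv g s) + J"
    using conv_has_integral[OF g] has_integral_unique by blast
  then show ?thesis using J by simp
qed

end

context hb2 begin

lemma norm_has_integral_le:
  fixes f :: "real \<Rightarrow> 'b::banach"
  assumes "(f has_integral I) {a..b}" "continuous_on {a..b} f" "a \<le> b"
    "\<And>t. t \<in> {a..b} \<Longrightarrow> norm (f t) \<le> B"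
  shows "norm I \<le> B * (b - a)"
proof -
  have "integral {a..b} f = I" using assms(1) by (rule integral_unique)
  then show ?thesis using integral_bound[of a b f B] assms(2-4) by simp
qed

lemma conv_diff_bound:
  assumes g: "continuous_on {0..t} g" and s: "0 \<le> s" "s \<le> t"
    and M: "\<And>x. x \<in> {0..t} \<Longrightarrow> norm (g x) \<le> M"
    and \<eta>: "\<And>\<sigma>. \<sigma> \<in> {0..s} \<Longrightarrow> norm (g ((t - s) + \<sigma>) - g \<sigma>) \<le> \<eta>"
  shows "norm (conv g t - conv g s) \<le> M * (t - s) + \<eta> * s"
proof -
  define \<delta> where "\<delta> = t - s"
  have \<delta>: "0 \<le> \<delta>" "\<delta> \<le> t" using s by (auto simp: \<delta>_def)
  have gs: "continuous_on {0..s} g" using g s by (auto intro: continuous_on_subset)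
  have g1: "continuous_on {0..\<delta>} g" using g \<delta> by (auto intro: continuous_on_subset)
  have g2: "continuous_on {\<delta>..t} g" using g \<delta> by (auto intro: continuous_on_subset)
  have gsh: "continuous_on {0..s} (\<lambda>\<sigma>. g (\<delta> + \<sigma>))"
  proof -
    have "continuous_on {0..s} (\<lambda>\<sigma>. \<delta> + \<sigma>)" by (intro continuous_intros)
    moreover have "(\<lambda>\<sigma>. \<delta> + \<sigma>) ` {0..s} \<subseteq> {0..t}" using \<delta> s by (auto simp: \<delta>_def)
    ultimately show ?thesis using continuous_on_compose2[OF g] by blast
  qed
  have c1: "continuous_on {0..\<delta>} (\<lambda>\<tau>. S (t - \<tau>) (g \<tau>))" using cont_Sv[OF g1] \<delta> by simp
  obtain J1 where J1: "((\<lambda>\<tau>. S (t - \<tau>) (g \<tau>)) has_integral J1) {0..\<delta>}"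
    using integrable_continuous_interval[OF c1] by auto
  obtain J2 where J2: "((\<lambda>\<tau>. S (t - \<tau>) (g \<tau>)) has_integral J2) {\<delta>..t}"
    using integrable_continuous_interval[OF cont_Sv[OF g2, of t]] by auto
  have "((\<lambda>\<tau>. S (t - \<tau>) (g \<tau>)) has_integral (J1 + J2)) {0..t}"
    by (rule has_integral_combine[OF \<delta> J1 J2])
  then have ct: "conv g t = J1 + J2" using conv_has_integral[OF g] has_integral_unique by blast
  have "(((\<lambda>\<tau>. S (t - \<tau>) (g \<tau>)) \<circ> (+) \<delta>) has_integral J2) {0..s}"
    using J2 has_integral_shift_Icc_real[of "\<lambda>\<tau>. S (t - \<tau>) (g \<tau>)" \<delta> J2 0 s] by (simp add: \<delta>_def)
  then have J2': "((\<lambda>\<sigma>. S (s - \<sigma>) (g (\<delta> + \<sigma>))) has_integral J2) {0..s}"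
    by (simp add: o_def \<delta>_def algebra_simps)
  have D: "((\<lambda>\<sigma>. S (s - \<sigma>) (g (\<delta> + \<sigma>)) - S (s - \<sigma>) (g \<sigma>)) has_integral (J2 - conv g s)) {0..s}"
    by (rule has_integral_diff[OF J2' conv_has_integral[OF gs]])
  have D': "((\<lambda>\<sigma>. S (s - \<sigma>) (g (\<delta> + \<sigma>) - g \<sigma>)) has_integral (J2 - conv g s)) {0..s}"
    using D by (rule has_integral_eq[rotated]) (auto simp: S_diff)
  have cD: "continuous_on {0..s} (\<lambda>\<sigma>. S (s - \<sigma>) (g (\<delta> + \<sigma>) - g \<sigma>))"
    by (rule cont_Sv) (auto intro!: continuous_intros gsh gs)
  have n2: "norm (J2 - conv g s) \<le> \<eta> * (s - 0)"
  proof (rule norm_has_integral_le[OF D' cD])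
    fix \<sigma> assume "\<sigma> \<in> {0..s}"
    then show "norm (S (s - \<sigma>) (g (\<delta> + \<sigma>) - g \<sigma>)) \<le> \<eta>"
      using \<eta>[of \<sigma>] S_norm[of "s - \<sigma>"] unfolding \<delta>_def by (meson atLeastAtMost_iff diff_ge_0_iff_ge order_trans)
  qed (use s in auto)
  have n1: "norm J1 \<le> M * (\<delta> - 0)"
  proof (rule norm_has_integral_le[OF J1 c1])
    fix \<tau> assume "\<tau> \<in> {0..\<delta>}"
    then show "norm (S (t - \<tau>) (g \<tau>)) \<le> M"
      using M[of \<tau>] S_norm[of "t - \<tau>" "g \<tau>"] \<delta> by auto
  qed (use \<delta> in auto)
  have "conv g t - conv g s = J1 + (J2 - conv g s)" using ct by simp
  then have "norm (conv g t - conv g s) \<le> norm J1 + norm (J2 - conv g s)" by (metis norm_triangle_ineq)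
  then show ?thesis using n1 n2 by (simp add: \<delta>_def)
qed

end

context hb2 begin

lemma conv_cont:
  assumes g: "continuous_on {0..T} g"
  shows "continuous_on {0..T} (conv g)"
  unfolding continuous_on_iff
proof (intro ballI allI impI)
  fix x \<epsilon> :: real assume x: "x \<in> {0..T}" and \<epsilon>: "\<epsilon> > 0"
  have T: "T \<ge> 0" using x by auto
  obtain M where M: "M > 0" "\<And>y. y \<in> g ` {0..T} \<Longrightarrow> norm y \<le> M"
    using compact_imp_bounded[OF compact_continuous_image[OF g compact_Icc]] unfolding bounded_pos by blast
  have uc: "uniformly_continuous_on {0..T} g" by (rule compact_uniformly_continuous[OF g compact_Icc])
  define \<eta> where "\<eta> = \<epsilon> / (2 * (T + 1))"
  have \<eta>: "\<eta> > 0" using \<epsilon> T by (simp add: \<eta>_def)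
  obtain d1 where d1: "d1 > 0" "\<And>a b. a \<in> {0..T} \<Longrightarrow> b \<in> {0..T} \<Longrightarrow> dist b a < d1 \<Longrightarrow> dist (g b) (g a) < \<eta>"
    using uc \<eta> unfolding uniformly_continuous_on_def by metis
  define d where "d = min d1 (\<epsilon> / (2 * M))"
  have d: "d > 0" using d1 \<epsilon> M by (simp add: d_def)
  have key: "norm (conv g t - conv g s) < \<epsilon>" if st: "0 \<le> s" "s \<le> t" "t \<le> T" "t - s < d" for s t
  proof -
    have gt: "continuous_on {0..t} g" using g st by (auto intro: continuous_on_subset)
    have b: "norm (conv g t - conv g s) \<le> M * (t - s) + \<eta> * s"
    proof (rule conv_diff_bound[OF gt st(1,2)])
      fix y assume "y \<in> {0..t}" then show "norm (g y) \<le> M" using M st by auto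
    next
      fix \<sigma> assume \<sigma>: "\<sigma> \<in> {0..s}"
      have "dist (g ((t - s) + \<sigma>)) (g \<sigma>) < \<eta>"
        using \<sigma> st d1(2)[of \<sigma> "(t - s) + \<sigma>"] by (auto simp: d_def dist_real_def)
      then show "norm (g ((t - s) + \<sigma>) - g \<sigma>) \<le> \<eta>" by (simp add: dist_norm)
    qed
    have "M * (t - s) \<le> M * (\<epsilon> / (2 * M))" using st M by (intro mult_left_mono) (auto simp: d_def)
    also have "\<dots> = \<epsilon> / 2" using M by simp
    finally have 1: "M * (t - s) \<le> \<epsilon> / 2" .
    have "\<eta> * s \<le> \<eta> * T" using \<eta> st by (intro mult_left_mono) auto
    also have "\<dots> < \<epsilon> / 2" using \<epsilon> T by (simp add: \<eta>_def field_simps)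
    finally have 2: "\<eta> * s < \<epsilon> / 2" .
    show ?thesis using b 1 2 by linarith
  qed
  show "\<exists>\<delta>>0. \<forall>x'\<in>{0..T}. dist x' x < \<delta> \<longrightarrow> dist (conv g x') (conv g x) < \<epsilon>"
  proof (intro exI conjI ballI impI)
    fix x' assume x': "x' \<in> {0..T}" and dx: "dist x' x < d"
    show "dist (conv g x') (conv g x) < \<epsilon>"
    proof (cases "x \<le> x'")
      case True
      then show ?thesis using key[of x x'] x x' dx by (auto simp: dist_norm dist_real_def)
    next
      case False
      then show ?thesis using key[of x' x] x x' dx by (auto simp: dist_norm dist_real_def norm_minus_commute)
    qed
  qed (rule d)
qed

end

context hb2 begin

lemma exp_has_integral:
  fixes c \<gamma> t :: real
  assumes "\<gamma> > 0" "0 \<le> t"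
  shows "((\<lambda>\<tau>. c * exp (\<gamma> * \<tau>)) has_integral (c * (exp (\<gamma> * t) - 1) / \<gamma>)) {0..t}"
proof -
  have "((\<lambda>\<tau>. c * exp (\<gamma> * \<tau>)) has_integral ((\<lambda>\<tau>. c * exp (\<gamma> * \<tau>) / \<gamma>) t - (\<lambda>\<tau>. c * exp (\<gamma> * \<tau>) / \<gamma>) 0)) {0..t}"
  proof (rule fundamental_theorem_of_calculus[where f = "\<lambda>\<tau>. c * exp (\<gamma> * \<tau>) / \<gamma>"])
    show "0 \<le> t" using assms by simp
    fix x assume "x \<in> {0..t}"
    show "((\<lambda>\<tau>. c * exp (\<gamma> * \<tau>) / \<gamma>) has_vector_derivative c * exp (\<gamma> * x)) (at x within {0..t})"
      unfolding has_real_derivative_iff_has_vector_derivative[symmetric]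
      using assms by (auto intro!: derivative_eq_intros)
  qed
  then show ?thesis by (simp add: diff_divide_distrib right_diff_distrib)
qed

lemma conv_lip:
  fixes c \<gamma> t :: real
  assumes g1: "continuous_on {0..t} g1" and g2: "continuous_on {0..t} g2" and t: "0 \<le> t"
    and \<gamma>: "\<gamma> > 0" and c: "0 \<le> c"
    and le: "\<And>\<tau>. \<tau> \<in> {0..t} \<Longrightarrow> norm (g1 \<tau> - g2 \<tau>) \<le> c * exp (\<gamma> * \<tau>)"
  shows "norm (conv g1 t - conv g2 t) \<le> c * (exp (\<gamma> * t) - 1) / \<gamma>"
proof -
  have D: "((\<lambda>\<tau>. S (t - \<tau>) (g1 \<tau>) - S (t - \<tau>) (g2 \<tau>)) has_integral (conv g1 t - conv g2 t)) {0..t}"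
    by (rule has_integral_diff[OF conv_has_integral[OF g1] conv_has_integral[OF g2]])
  have E: "((\<lambda>\<tau>. c * exp (\<gamma> * \<tau>)) has_integral (c * (exp (\<gamma> * t) - 1) / \<gamma>)) {0..t}"
    by (rule exp_has_integral[OF \<gamma> t])
  have "norm (integral {0..t} (\<lambda>\<tau>. S (t - \<tau>) (g1 \<tau>) - S (t - \<tau>) (g2 \<tau>))) \<le> integral {0..t} (\<lambda>\<tau>. c * exp (\<gamma> * \<tau>))"
  proof (rule integral_norm_bound_integral)
    show "(\<lambda>\<tau>. S (t - \<tau>) (g1 \<tau>) - S (t - \<tau>) (g2 \<tau>)) integrable_on {0..t}" using D by blast
    show "(\<lambda>\<tau>. c * exp (\<gamma> * \<tau>)) integrable_on {0..t}" using E by blast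
    fix \<tau> assume \<tau>: "\<tau> \<in> {0..t}"
    then have "S (t - \<tau>) (g1 \<tau>) - S (t - \<tau>) (g2 \<tau>) = S (t - \<tau>) (g1 \<tau> - g2 \<tau>)" by (simp add: S_diff)
    moreover have "norm (S (t - \<tau>) (g1 \<tau> - g2 \<tau>)) \<le> norm (g1 \<tau> - g2 \<tau>)" using \<tau> by (intro S_norm) auto
    ultimately show "norm (S (t - \<tau>) (g1 \<tau>) - S (t - \<tau>) (g2 \<tau>)) \<le> c * exp (\<gamma> * \<tau>)" using le[OF \<tau>] by simp
  qed
  then show ?thesis using integral_unique[OF D] integral_unique[OF E] by simp
qed

end

locale hb3 = hb2 e lam N for e :: "nat \<Rightarrow> 'a::{real_inner,banach}" and lam N +
  fixes F :: "'a \<Rightarrow> 'a" and K0 K1 T :: real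
  assumes F_lip: "\<forall>u v. norm (F u - F v) \<le> K1 * norm (u - v)"
    and F_bnd: "\<forall>u. norm (F u) \<le> K0"
    and K1: "0 < K1" and T: "0 \<le> T"
begin

definition "gam = 2 * K1 + 1"
definition "cl t = max 0 (min T t)"
definition "gF w \<tau> = F (exp (gam * \<tau>) *\<^sub>R w \<tau>)"
definition "Psi \<xi> w t = exp (- gam * t) *\<^sub>R (S t \<xi> + conv (gF w) t)"

lemma gam_pos: "gam > 0" using K1 by (simp add: gam_def)

lemma cl_in: "cl t \<in> {0..T}" using T by (auto simp: cl_def)
lemma cl_id: "t \<in> {0..T} \<Longrightarrow> cl t = t" by (auto simp: cl_def)

lemma F_cont: "continuous_on A F"
proof (rule lipschitz_on_continuous_on)
  show "K1-lipschitz_on A F"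
    using F_lip K1 by (auto simp: lipschitz_on_def dist_norm)
qed

lemma gF_cont: "continuous_on A w \<Longrightarrow> continuous_on A (gF w)"
  unfolding gF_def by (rule continuous_on_compose2[OF F_cont[of UNIV]]) (auto intro!: continuous_intros)

lemma Psi_cont:
  assumes "continuous_on {0..T} w"
  shows "continuous_on {0..T} (Psi \<xi> w)"
proof -
  have "continuous_on {0..T} (\<lambda>t. S t \<xi>)" using S_cont[of \<xi>] by (rule continuous_on_subset) auto
  moreover have "continuous_on {0..T} (conv (gF w))" by (rule conv_cont[OF gF_cont[OF assms]])
  ultimately show ?thesis unfolding Psi_def by (intro continuous_intros)
qed

lemma Psi_bcont:
  assumes "continuous_on {0..T} w"
  shows "(\<lambda>t. Psi \<xi> w (cl t)) \<in> bcontfun"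
  unfolding bcontfun_def
proof (intro CollectI conjI)
  have "continuous_on UNIV cl" unfolding cl_def by (intro continuous_intros)
  then show "continuous_on UNIV (\<lambda>t. Psi \<xi> w (cl t))"
    using continuous_on_compose2[OF Psi_cont[OF assms]] cl_in by blast
  have "range (\<lambda>t. Psi \<xi> w (cl t)) \<subseteq> Psi \<xi> w ` {0..T}" using cl_in by auto
  moreover have "bounded (Psi \<xi> w ` {0..T})"
    by (intro compact_imp_bounded compact_continuous_image Psi_cont[OF assms] compact_Icc)
  ultimately show "bounded (range (\<lambda>t. Psi \<xi> w (cl t)))" by (rule bounded_subset[rotated])
qed

definition Tm :: "'a \<Rightarrow> (real \<Rightarrow>\<^sub>C 'a) \<Rightarrow> (real \<Rightarrow>\<^sub>C 'a)" where
  "Tm \<xi> w = Bcontfun (\<lambda>t. Psi \<xi> (apply_bcontfun w) (cl t))"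

lemma Tm_apply: "apply_bcontfun (Tm \<xi> w) t = Psi \<xi> (apply_bcontfun w) (cl t)"
  unfolding Tm_def by (subst Bcontfun_inverse[OF Psi_bcont]) auto

lemma Tm_contr: "dist (Tm \<xi> w1) (Tm \<xi> w2) \<le> 1/2 * dist w1 w2"
proof (rule dist_bound)
  fix t
  define s where "s = cl t"
  have s: "s \<in> {0..T}" unfolding s_def by (rule cl_in)
  define d where "d = dist w1 w2"
  have d: "d \<ge> 0" by (simp add: d_def)
  have cw1: "continuous_on {0..s} (gF (apply_bcontfun w1))" by (intro gF_cont) auto
  have cw2: "continuous_on {0..s} (gF (apply_bcontfun w2))" by (intro gF_cont) auto
  have "norm (conv (gF (apply_bcontfun w1)) s - conv (gF (apply_bcontfun w2)) s) \<le> (K1 * d) * (exp (gam * s) - 1) / gam"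
  proof (rule conv_lip[OF cw1 cw2 _ gam_pos])
    show "0 \<le> s" using s by simp
    show "0 \<le> K1 * d" using K1 d by simp
    fix \<tau> assume "\<tau> \<in> {0..s}"
    have "norm (gF w1 \<tau> - gF w2 \<tau>) \<le> K1 * norm (exp (gam * \<tau>) *\<^sub>R w1 \<tau> - exp (gam * \<tau>) *\<^sub>R w2 \<tau>)"
      using F_lip by (simp add: gF_def)
    also have "\<dots> = K1 * (exp (gam * \<tau>) * norm (w1 \<tau> - w2 \<tau>))"
      by (simp add: scaleR_diff_right[symmetric])
    also have "\<dots> \<le> K1 * (exp (gam * \<tau>) * d)"
      using dist_bounded[of w1 \<tau> w2] K1 by (intro mult_left_mono) (auto simp: d_def dist_norm)
    finally show "norm (gF w1 \<tau> - gF w2 \<tau>) \<le> K1 * d * exp (gam * \<tau>)" by (simp add: mult_ac)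
  qed
  then have "exp (- gam * s) * norm (conv (gF w1) s - conv (gF w2) s) \<le> exp (- gam * s) * ((K1 * d) * (exp (gam * s) - 1) / gam)"
    by (intro mult_left_mono) auto
  also have "\<dots> = (K1 * d / gam) * (1 - exp (- gam * s))"
    using gam_pos by (simp add: field_simps exp_minus exp_gt_zero)
  also have "\<dots> \<le> (K1 * d / gam) * 1"
    using K1 d gam_pos by (intro mult_left_mono) auto
  also have "\<dots> \<le> 1/2 * d" using K1 d gam_pos by (simp add: gam_def field_simps)
  finally have *: "exp (- gam * s) * norm (conv (gF w1) s - conv (gF w2) s) \<le> 1/2 * d" .
  have "Tm \<xi> w1 t - Tm \<xi> w2 t = exp (- gam * s) *\<^sub>R (conv (gF w1) s - conv (gF w2) s)"
    by (simp add: Tm_apply Psi_def s_def flip: scaleR_diff_right)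
  then show "dist (Tm \<xi> w1 t) (Tm \<xi> w2 t) \<le> 1/2 * dist w1 w2"
    using * by (simp add: dist_norm d_def)
qed

lemma Tm_xi: "dist (Tm \<xi>1 w) (Tm \<xi>2 w) \<le> norm (\<xi>1 - \<xi>2)"
proof (rule dist_bound)
  fix t
  define s where "s = cl t"
  have s: "s \<in> {0..T}" unfolding s_def by (rule cl_in)
  have "Tm \<xi>1 w t - Tm \<xi>2 w t = exp (- gam * s) *\<^sub>R S s (\<xi>1 - \<xi>2)"
    using s by (simp add: Tm_apply Psi_def s_def S_diff flip: scaleR_diff_right)
  moreover have "exp (- gam * s) \<le> 1" using s gam_pos by simp
  moreover have "norm (S s (\<xi>1 - \<xi>2)) \<le> norm (\<xi>1 - \<xi>2)" using s by (intro S_norm) auto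
  ultimately show "dist (Tm \<xi>1 w t) (Tm \<xi>2 w t) \<le> norm (\<xi>1 - \<xi>2)"
  proof -
    assume a: "Tm \<xi>1 w t - Tm \<xi>2 w t = exp (- gam * s) *\<^sub>R S s (\<xi>1 - \<xi>2)" "exp (- gam * s) \<le> 1"
      "norm (S s (\<xi>1 - \<xi>2)) \<le> norm (\<xi>1 - \<xi>2)"
    have "exp (- gam * s) * norm (S s (\<xi>1 - \<xi>2)) \<le> 1 * norm (S s (\<xi>1 - \<xi>2))"
      using a(2) by (intro mult_right_mono) auto
    then show ?thesis using a by (simp add: dist_norm)
  qed
qed

end

context hb3 begin

definition fp :: "'a \<Rightarrow> (real \<Rightarrow>\<^sub>C 'a)" where "fp \<xi> = (THE w. Tm \<xi> w = w)"

lemma fp_eq: "Tm \<xi> (fp \<xi>) = fp \<xi>"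
proof -
  have "\<exists>!w. Tm \<xi> w = w"
    by (rule banach_fix_type[of "1/2"]) (use Tm_contr in auto)
  then show ?thesis unfolding fp_def by (rule theI')
qed

lemma fp_lip: "dist (fp \<xi>1) (fp \<xi>2) \<le> 2 * norm (\<xi>1 - \<xi>2)"
proof -
  have "dist (fp \<xi>1) (fp \<xi>2) = dist (Tm \<xi>1 (fp \<xi>1)) (Tm \<xi>2 (fp \<xi>2))" by (simp add: fp_eq)
  also have "\<dots> \<le> dist (Tm \<xi>1 (fp \<xi>1)) (Tm \<xi>1 (fp \<xi>2)) + dist (Tm \<xi>1 (fp \<xi>2)) (Tm \<xi>2 (fp \<xi>2))"
    by (rule dist_triangle)
  also have "\<dots> \<le> 1/2 * dist (fp \<xi>1) (fp \<xi>2) + norm (\<xi>1 - \<xi>2)"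
    using Tm_contr Tm_xi by (rule add_mono)
  finally show ?thesis by simp
qed

definition sol :: "'a \<Rightarrow> real \<Rightarrow> 'a" where "sol \<xi> t = exp (gam * t) *\<^sub>R apply_bcontfun (fp \<xi>) t"

lemma sol_cont: "continuous_on A (sol \<xi>)"
  unfolding sol_def by (intro continuous_intros) auto

lemma sol_eq:
  assumes t: "t \<in> {0..T}"
  shows "sol \<xi> t = S t \<xi> + conv (\<lambda>\<tau>. F (sol \<xi> \<tau>)) t"
proof -
  have "apply_bcontfun (fp \<xi>) t = apply_bcontfun (Tm \<xi> (fp \<xi>)) t" by (simp add: fp_eq)
  also have "\<dots> = Psi \<xi> (fp \<xi>) t" using t by (simp add: Tm_apply cl_id)
  finally have "sol \<xi> t = exp (gam * t) *\<^sub>R Psi \<xi> (fp \<xi>) t" by (simp add: sol_def)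
  also have "\<dots> = S t \<xi> + conv (gF (fp \<xi>)) t"
    by (simp add: Psi_def exp_minus field_simps)
  also have "gF (fp \<xi>) = (\<lambda>\<tau>. F (sol \<xi> \<tau>))" by (simp add: gF_def sol_def fun_eq_iff)
  finally show ?thesis .
qed

lemma conv_0: "conv g 0 = 0"
  by (simp add: conv_def)

lemma sol_0: "sol \<xi> 0 = \<xi>"
  using sol_eq[of 0 \<xi>] T by (simp add: S_0 conv_0)

lemma Fsol_cont: "continuous_on A (\<lambda>\<tau>. F (sol \<xi> \<tau>))"
  by (rule continuous_on_compose2[OF F_cont[of UNIV] sol_cont]) auto

lemma sol_mild:
  assumes st: "0 \<le> s" "s \<le> t" "t \<le> T"
  shows "((\<lambda>\<tau>. S (t - \<tau>) (F (sol \<xi> \<tau>))) has_integral (sol \<xi> t - S (t - s) (sol \<xi> s))) {s..t}"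
proof -
  have I: "((\<lambda>\<tau>. S (t - \<tau>) (F (sol \<xi> \<tau>))) has_integral
      (conv (\<lambda>\<tau>. F (sol \<xi> \<tau>)) t - S (t - s) (conv (\<lambda>\<tau>. F (sol \<xi> \<tau>)) s))) {s..t}"
    by (rule conv_split[OF Fsol_cont st(1,2)])
  have "sol \<xi> t - S (t - s) (sol \<xi> s) =
      S t \<xi> + conv (\<lambda>\<tau>. F (sol \<xi> \<tau>)) t - S (t - s) (S s \<xi> + conv (\<lambda>\<tau>. F (sol \<xi> \<tau>)) s)"
    using st by (simp add: sol_eq)
  also have "\<dots> = conv (\<lambda>\<tau>. F (sol \<xi> \<tau>)) t - S (t - s) (conv (\<lambda>\<tau>. F (sol \<xi> \<tau>)) s)"
    using st by (simp add: S_add S_comp)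
  finally show ?thesis using I by simp
qed

lemma P_norm: "norm (P v) \<le> norm v"
  using norm_le_coef[of 1 "P v" v] by (simp add: P_coef)

lemma conv_F_bound:
  assumes t: "t \<in> {0..T}"
  shows "norm (conv (\<lambda>\<tau>. F (sol \<xi> \<tau>)) t) \<le> K0 * T"
proof -
  have "norm (conv (\<lambda>\<tau>. F (sol \<xi> \<tau>)) t) \<le> K0 * (t - 0)"
  proof (rule norm_has_integral_le[OF conv_has_integral[OF Fsol_cont]])
    show "continuous_on {0..t} (\<lambda>\<tau>. S (t - \<tau>) (F (sol \<xi> \<tau>)))" by (intro cont_Sv Fsol_cont) simp
    fix \<tau> assume "\<tau> \<in> {0..t}"
    then show "norm (S (t - \<tau>) (F (sol \<xi> \<tau>))) \<le> K0"
      using S_norm[of "t - \<tau>" "F (sol \<xi> \<tau>)"] F_bnd by (meson atLeastAtMost_iff diff_ge_0_iff_ge order_trans)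
  qed (use t in auto)
  moreover have "0 \<le> K0" using F_bnd norm_ge_zero order_trans by blast
  ultimately show ?thesis using t by (smt (verit) atLeastAtMost_iff mult_left_mono)
qed

lemma sol_T_lip: "norm (sol \<xi>1 T - sol \<xi>2 T) \<le> exp (gam * T) * 2 * norm (\<xi>1 - \<xi>2)"
proof -
  have "sol \<xi>1 T - sol \<xi>2 T = exp (gam * T) *\<^sub>R (apply_bcontfun (fp \<xi>1) T - apply_bcontfun (fp \<xi>2) T)"
    by (simp add: sol_def scaleR_diff_right)
  moreover have "norm (apply_bcontfun (fp \<xi>1) T - apply_bcontfun (fp \<xi>2) T) \<le> 2 * norm (\<xi>1 - \<xi>2)"
    using dist_bounded[of "fp \<xi>1" T "fp \<xi>2"] fp_lip[of \<xi>1 \<xi>2] by (simp add: dist_norm)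
  ultimately show ?thesis by (simp add: mult.assoc mult_left_mono)
qed

end

context hb3 begin

definition "CE = (\<Sum>k<N. exp (lam k * T))"
definition "E v = (\<Sum>k<N. (exp (lam k * T) * (v \<bullet> e k)) *\<^sub>R e k)"

lemma E_coef: "E v \<bullet> e j = (if j < N then exp (lam j * T) * (v \<bullet> e j) else 0)"
  by (simp add: E_def inner_sum_left orth' if_distrib cong: if_cong)

lemma E_P: "E v \<in> range P"
  unfolding range_P by (simp add: E_coef)

lemma S_E: "v \<in> range P \<Longrightarrow> S T (E v) = v"
  by (rule coef_ext) (use T in \<open>auto simp: S_coef E_coef range_P exp_minus field_simps\<close>)

lemma CE_nonneg: "0 \<le> CE" by (simp add: CE_def sum_nonneg)

lemma E_norm: "norm (E v) \<le> CE * norm v"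
proof (rule norm_le_coef[OF CE_nonneg])
  fix k
  show "\<bar>E v \<bullet> e k\<bar> \<le> CE * \<bar>v \<bullet> e k\<bar>"
  proof (cases "k < N")
    case True
    have "exp (lam k * T) \<le> CE" unfolding CE_def
      using True by (intro member_le_sum) auto
    then show ?thesis using True by (simp add: E_coef abs_mult mult_right_mono)
  next
    case False
    then show ?thesis by (simp add: E_coef CE_nonneg)
  qed
qed

lemma E_cont: "continuous_on A E"
  unfolding E_def by (intro continuous_intros)

lemma range_P_span: "range P = span (e ` {..<N})"
proof
  show "range P \<subseteq> span (e ` {..<N})"
  proof
    fix v assume "v \<in> range P"
    then obtain u where "v = P u" by blast
    have "P u \<in> span (e ` {..<N})" unfolding Pproj_def
      by (rule span_sum, rule span_mul, rule span_base) auto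
    then show "v \<in> span (e ` {..<N})" using \<open>v = P u\<close> by simp
  qed
  show "span (e ` {..<N}) \<subseteq> range P"
  proof
    fix v assume "v \<in> span (e ` {..<N})"
    then have "v = P v" using span_repr[OF orth, of v N] by (simp add: Pproj_def)
    then show "v \<in> range P" by blast
  qed
qed

definition "G \<xi> = P (sol \<xi> T) - S T \<xi>"

lemma solT_cont: "continuous_on A (\<lambda>\<xi>. sol \<xi> T)"
proof -
  have "(exp (gam * T) * 2)-lipschitz_on A (\<lambda>\<xi>. sol \<xi> T)"
    using sol_T_lip gam_pos by (auto simp: lipschitz_on_def dist_norm)
  then show ?thesis by (rule lipschitz_on_continuous_on)
qed

lemma G_cont: "continuous_on A G"
  unfolding G_def
  by (intro continuous_on_diff bounded_linear.continuous_on[OF P_bl solT_cont]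
      bounded_linear.continuous_on[OF S_bl continuous_on_id]) (use T in auto)

lemma G_on_P:
  assumes "\<xi> \<in> range P"
  shows "G \<xi> = P (conv (\<lambda>\<tau>. F (sol \<xi> \<tau>)) T)"
proof -
  have "P \<xi> = \<xi>" using assms by (auto intro: coef_ext simp: P_coef range_P)
  then have "P (S T \<xi>) = S T \<xi>" using T by (simp add: P_S)
  then show ?thesis using sol_eq[of T \<xi>] T
    by (simp add: G_def linear_add[OF bounded_linear.linear[OF P_bl]])
qed

lemma G_bound: "\<xi> \<in> range P \<Longrightarrow> norm (G \<xi>) \<le> K0 * T"
  using G_on_P P_norm conv_F_bound[of T] T order_trans by fastforce

lemma shooting:
  assumes N: "1 \<le> N" and p0: "p0 \<in> range P"
  shows "\<exists>\<xi>\<in>range P. P (sol \<xi> T) = p0"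
proof -
  define R where "R = CE * (norm p0 + K0 * T) + 1"
  have K0: "0 \<le> K0" using F_bnd norm_ge_zero order_trans by blast
  have R: "R > 0" using CE_nonneg K0 T by (simp add: R_def add_nonneg_pos)
  define V where "V = span (e ` {..<N})"
  have rP: "range P = V" by (simp add: V_def range_P_span)
  define f where "f x = inverse R *\<^sub>R E (p0 - G (R *\<^sub>R x))" for x
  have cf: "continuous_on (V \<inter> cball 0 1) f"
    unfolding f_def by (intro continuous_intros continuous_on_compose2[OF E_cont[of UNIV]]
        continuous_on_compose2[OF G_cont[of UNIV]]) auto
  have fD: "f \<in> (V \<inter> cball 0 1) \<rightarrow> (V \<inter> cball 0 1)"
  proof
    fix x assume x: "x \<in> V \<inter> cball 0 1"
    have "R *\<^sub>R x \<in> V" using x by (auto simp: V_def span_mul)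
    then have "norm (G (R *\<^sub>R x)) \<le> K0 * T" using G_bound rP by blast
    then have "norm (p0 - G (R *\<^sub>R x)) \<le> norm p0 + K0 * T" by (smt (verit) norm_triangle_ineq4)
    then have "norm (E (p0 - G (R *\<^sub>R x))) \<le> CE * (norm p0 + K0 * T)"
      using E_norm order_trans mult_left_mono CE_nonneg by blast
    then have "norm (E (p0 - G (R *\<^sub>R x))) \<le> R" by (simp add: R_def)
    then have "norm (f x) \<le> 1" using R by (simp add: f_def field_simps)
    moreover have "f x \<in> V" using E_P rP by (auto simp: f_def V_def intro: span_mul)
    ultimately show "f x \<in> V \<inter> cball 0 1" by auto
  qed
  obtain x where x: "x \<in> V \<inter> cball 0 1" "f x = x"
    using brouwer_span[OF orth N] cf fD unfolding V_def by blast
  define \<xi> where "\<xi> = R *\<^sub>R x"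
  have \<xi>P: "\<xi> \<in> range P" using x rP by (auto simp: \<xi>_def V_def span_mul)
  have "E (p0 - G \<xi>) = R *\<^sub>R (inverse R *\<^sub>R E (p0 - G (R *\<^sub>R x)))" using R by (simp add: \<xi>_def)
  also have "\<dots> = \<xi>" using x(2) by (simp add: f_def \<xi>_def)
  finally have "E (p0 - G \<xi>) = \<xi>" .
  then have "S T \<xi> = p0 - G \<xi>"
  proof -
    assume h: "E (p0 - G \<xi>) = \<xi>"
    have "p0 - G \<xi> \<in> range P"
    proof -
      have "G \<xi> \<in> range P" using G_on_P[OF \<xi>P] by auto
      then show ?thesis using p0 unfolding range_P by (simp add: inner_diff_left)
    qed
    then show ?thesis using S_E h by metis
  qed
  then have "P (sol \<xi> T) = p0" by (simp add: G_def)
  then show ?thesis using \<xi>P by blast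
qed

end

lemma PQ_sum: "Pproj e N u + Qproj e N u = u"
  by (simp add: Qproj_def)

theorem lemma2p1_b:
  fixes e :: "nat \<Rightarrow> 'a::{real_inner,banach}"
    and lam :: "nat \<Rightarrow> real" and F :: "'a \<Rightarrow> 'a"
    and N n :: nat and K0 K1 R :: real and p0 :: 'a
  assumes orthonormal: "\<forall>j k. e j \<bullet> e k = (if j = k then 1 else 0)"
    and basis: "\<forall>u. (\<lambda>k. (u \<bullet> e k) *\<^sub>R e k) sums u"
    and lam_pos: "0 < lam 0"
    and lam_mono: "mono lam"
    and N_pos: "1 \<le> N"
    and K1_pos: "0 < K1"
    and F_bounded: "\<forall>u. norm (F u) \<le> K0"
    and F_lipschitz: "\<forall>u v. norm (F u - F v) \<le> K1 * norm (u - v)"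
    and p0: "p0 \<in> range (Pproj e N)"
  shows "\<exists>p q :: real \<Rightarrow> 'a.
     continuous_on {0..real n} p \<and> continuous_on {0..real n} q \<and>
     (\<forall>t\<in>{0..real n}. p t \<in> range (Pproj e N) \<and> q t \<in> range (Qproj e N)) \<and>
     (\<forall>s t. 0 \<le> s \<and> s \<le> t \<and> t \<le> real n \<longrightarrow>
        ((\<lambda>\<tau>. semigrp e lam (t - \<tau>) (Pproj e N (F (p \<tau> + q \<tau>))))
            has_integral (p t - semigrp e lam (t - s) (p s))) {s..t} \<and>
        ((\<lambda>\<tau>. semigrp e lam (t - \<tau>) (Qproj e N (F (p \<tau> + q \<tau>))))
            has_integral (q t - semigrp e lam (t - s) (q s))) {s..t}) \<and>
     p (real n) = p0 \<and> q 0 = 0"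
proof -
  have lp: "\<And>k. 0 < lam k" using lam_pos lam_mono by (metis le0 monoD order_less_le_trans)
  interpret hb3 e lam N F K0 K1 "real n"
    by unfold_locales (use orthonormal basis lp F_lipschitz F_bounded K1_pos in auto)
  obtain \<xi> where \<xi>: "\<xi> \<in> range P" "P (sol \<xi> (real n)) = p0"
    using shooting[OF N_pos p0] by blast
  define p where "p t = P (sol \<xi> t)" for t
  define q where "q t = Q (sol \<xi> t)" for t
  have pq: "p t + q t = sol \<xi> t" for t by (simp add: p_def q_def PQ_sum)
  have mild: "((\<lambda>\<tau>. S (t - \<tau>) (L (F (p \<tau> + q \<tau>)))) has_integral (L (sol \<xi> t) - S (t - s) (L (sol \<xi> s)))) {s..t}"
    if st: "0 \<le> s" "s \<le> t" "t \<le> real n" and L: "bounded_linear L" and LS: "\<And>r x. r \<ge> 0 \<Longrightarrow> L (S r x) = S r (L x)"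
    for s t and L :: "'a \<Rightarrow> 'a"
  proof -
    have "((L \<circ> (\<lambda>\<tau>. S (t - \<tau>) (F (sol \<xi> \<tau>)))) has_integral L (sol \<xi> t - S (t - s) (sol \<xi> s))) {s..t}"
      by (rule has_integral_linear[OF sol_mild[OF st] L])
    moreover have "L (sol \<xi> t - S (t - s) (sol \<xi> s)) = L (sol \<xi> t) - S (t - s) (L (sol \<xi> s))"
      using st by (simp add: linear_diff[OF bounded_linear.linear[OF L]] LS)
    ultimately show ?thesis
      by (subst has_integral_cong[where g = "L \<circ> (\<lambda>\<tau>. S (t - \<tau>) (F (sol \<xi> \<tau>)))"]) (auto simp: pq LS)
  qed
  show ?thesis
  proof (intro exI conjI ballI allI impI)
    show "continuous_on {0..real n} p" unfolding p_def by (rule bounded_linear.continuous_on[OF P_bl sol_cont])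
    show "continuous_on {0..real n} q" unfolding q_def by (rule bounded_linear.continuous_on[OF Q_bl sol_cont])
    fix t assume "t \<in> {0..real n}"
    show "p t \<in> range P" by (simp add: p_def)
    show "q t \<in> range Q" by (simp add: q_def)
  next
    fix s t :: real assume st: "0 \<le> s \<and> s \<le> t \<and> t \<le> real n"
    show "((\<lambda>\<tau>. S (t - \<tau>) (P (F (p \<tau> + q \<tau>)))) has_integral (p t - S (t - s) (p s))) {s..t}"
      using mild[of s t P] st P_bl P_S by (simp add: p_def)
    show "((\<lambda>\<tau>. S (t - \<tau>) (Q (F (p \<tau> + q \<tau>)))) has_integral (q t - S (t - s) (q s))) {s..t}"
      using mild[of s t Q] st Q_bl Q_S by (simp add: q_def)
  next
    show "p (real n) = p0" using \<xi> by (simp add: p_def)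
    have "Q \<xi> = 0" using \<xi>(1) by (intro coef_ext) (auto simp: Q_coef range_P)
    then show "q 0 = 0" by (simp add: q_def sol_0)
  qed
qed

typedef ('a::"{real_inner,complete_space}") hw = "UNIV :: 'a set" morphisms rep abs by auto

setup_lifting type_definition_hw

instantiation hw :: ("{real_inner,complete_space}") real_inner
begin
lift_definition zero_hw :: "'a hw" is "0" .
lift_definition plus_hw :: "'a hw \<Rightarrow> 'a hw \<Rightarrow> 'a hw" is "(+)" .
lift_definition minus_hw :: "'a hw \<Rightarrow> 'a hw \<Rightarrow> 'a hw" is "(-)" .
lift_definition uminus_hw :: "'a hw \<Rightarrow> 'a hw" is uminus .
lift_definition scaleR_hw :: "real \<Rightarrow> 'a hw \<Rightarrow> 'a hw" is scaleR .
lift_definition norm_hw :: "'a hw \<Rightarrow> real" is norm .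
lift_definition sgn_hw :: "'a hw \<Rightarrow> 'a hw" is sgn .
lift_definition dist_hw :: "'a hw \<Rightarrow> 'a hw \<Rightarrow> real" is dist .
lift_definition inner_hw :: "'a hw \<Rightarrow> 'a hw \<Rightarrow> real" is inner .
definition uniformity_hw :: "('a hw \<times> 'a hw) filter" where
  "uniformity_hw = (INF e\<in>{0<..}. principal {(x, y). dist x y < e})"
definition open_hw :: "'a hw set \<Rightarrow> bool" where
  "open_hw U \<longleftrightarrow> (\<forall>x\<in>U. eventually (\<lambda>(x', y). x' = x \<longrightarrow> y \<in> U) uniformity)"
instance
proof
  show "\<And>a b c :: 'a hw. a + b + c = a + (b + c)" by transfer (simp add: add.assoc)
  show "\<And>a b :: 'a hw. a + b = b + a" by transfer (simp add: add.commute)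
  show "\<And>a :: 'a hw. 0 + a = a" by transfer simp
  show "\<And>a :: 'a hw. - a + a = 0" by transfer simp
  show "\<And>a b :: 'a hw. a - b = a + - b" by transfer simp
  show "\<And>a :: real. \<And>x y :: 'a hw. a *\<^sub>R (x + y) = a *\<^sub>R x + a *\<^sub>R y" by transfer (simp add: scaleR_add_right)
  show "\<And>a b :: real. \<And>x :: 'a hw. (a + b) *\<^sub>R x = a *\<^sub>R x + b *\<^sub>R x" by transfer (simp add: scaleR_add_left)
  show "\<And>a b :: real. \<And>x :: 'a hw. a *\<^sub>R b *\<^sub>R x = (a * b) *\<^sub>R x" by transfer simp
  show "\<And>x :: 'a hw. 1 *\<^sub>R x = x" by transfer simp
  show "\<And>x :: 'a hw. sgn x = inverse (norm x) *\<^sub>R x" by transfer (simp add: sgn_div_norm)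
  show "\<And>x y :: 'a hw. dist x y = norm (x - y)" by transfer (simp add: dist_norm)
  show "(uniformity :: ('a hw \<times> 'a hw) filter) = (INF e\<in>{0<..}. principal {(x, y). dist x y < e})"
    by (simp add: uniformity_hw_def)
  show "\<And>U :: 'a hw set. open U = (\<forall>x\<in>U. \<forall>\<^sub>F (x', y) in uniformity. x' = x \<longrightarrow> y \<in> U)"
    by (simp add: open_hw_def)
  show "\<And>x y :: 'a hw. inner x y = inner y x" by transfer (simp add: inner_commute)
  show "\<And>x y z :: 'a hw. inner (x + y) z = inner x z + inner y z" by transfer (simp add: inner_add_left)
  show "\<And>r :: real. \<And>x y :: 'a hw. inner (r *\<^sub>R x) y = r * inner x y" by transfer simp
  show "\<And>x :: 'a hw. 0 \<le> inner x x" by transfer simp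
  show "\<And>x :: 'a hw. (inner x x = 0) = (x = 0)" by transfer simp
  show "\<And>x :: 'a hw. norm x = sqrt (inner x x)" by transfer (simp add: norm_eq_sqrt_inner)
qed
end

lemma dist_rep: "dist (rep x) (rep y) = dist x y" by transfer simp

instance hw :: ("{real_inner,complete_space}") complete_space
proof
  fix X :: "nat \<Rightarrow> 'a hw" assume "Cauchy X"
  then have "Cauchy (\<lambda>n. rep (X n))" by (simp add: Cauchy_def dist_rep)
  then obtain L where L: "(\<lambda>n. rep (X n)) \<longlonglongrightarrow> L" using Cauchy_convergent convergent_def by blast
  have "X \<longlonglongrightarrow> abs L"
    unfolding lim_sequentially
  proof (intro allI impI)
    fix r :: real assume "r > 0"
    then obtain M where "\<forall>n\<ge>M. dist (rep (X n)) L < r" using L unfolding lim_sequentially by blast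
    then show "\<exists>M. \<forall>n\<ge>M. dist (X n) (abs L) < r"
      by (metis abs_inverse dist_rep iso_tuple_UNIV_I)
  qed
  then show "convergent X" by (auto simp: convergent_def)
qed

instance hw :: ("{real_inner,complete_space}") banach ..

lemma rep_add: "rep (x + y) = rep x + rep y" by transfer simp
lemma rep_diff: "rep (x - y) = rep x - rep y" by transfer simp
lemma rep_scale: "rep (c *\<^sub>R x) = c *\<^sub>R rep x" by transfer simp
lemma rep_zero: "rep 0 = 0" by transfer simp
lemma norm_rep: "norm (rep x) = norm x" by transfer simp
lemma inner_rep: "rep x \<bullet> rep y = x \<bullet> y" by transfer simp
lemma rep_abs: "rep (abs y) = y" by (simp add: abs_inverse)
lemma abs_rep: "abs (rep x) = x" by (rule rep_inverse)

lemma rep_bl: "bounded_linear rep"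
  by (rule bounded_linear_intro[where K=1]) (simp_all add: rep_add rep_scale norm_rep)

lemma abs_bl: "bounded_linear (abs :: 'a::{real_inner,complete_space} \<Rightarrow> 'a hw)"
proof (rule bounded_linear_intro[where K=1])
  show "abs (x + y) = abs x + abs y" for x y :: 'a by (metis rep_abs rep_add rep_inject)
  show "abs (r *\<^sub>R x) = r *\<^sub>R abs x" for r and x :: 'a by (metis rep_abs rep_scale rep_inject)
  show "norm (abs x) \<le> norm x * 1" for x :: 'a by (metis norm_rep rep_abs order_refl mult_1_right)
qed

lemma rep_sum: "rep (\<Sum>k\<in>A. f k) = (\<Sum>k\<in>A. rep (f k))"
  by (rule linear_sum[OF bounded_linear.linear[OF rep_bl]])

lemma rep_Pproj: "rep (Pproj (\<lambda>k. abs (e k)) N v) = Pproj e N (rep v)"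
  by (simp add: Pproj_def rep_sum rep_scale rep_abs inner_rep[symmetric])

lemma rep_Qproj: "rep (Qproj (\<lambda>k. abs (e k)) N v) = Qproj e N (rep v)"
  by (simp add: Qproj_def rep_diff rep_Pproj)

lemma rep_semigrp:
  fixes e :: "nat \<Rightarrow> 'a::{real_inner,complete_space}"
  assumes orth: "\<forall>j k. e j \<bullet> e k = (if j = k then 1 else 0)"
    and basis: "\<forall>u. (\<lambda>k. (u \<bullet> e k) *\<^sub>R e k) sums u"
    and lp: "\<And>k. 0 < lam k" and r: "0 \<le> r"
  shows "rep (semigrp (\<lambda>k. abs (e k)) lam r v) = semigrp e lam r (rep v)"
proof -
  define e' where "e' = (\<lambda>k. abs (e k))"
  have hb': "hb e'"
  proof
    show "\<forall>j k. e' j \<bullet> e' k = (if j = k then 1 else 0)"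
      using orth by (simp add: e'_def inner_rep[symmetric] rep_abs)
    show "\<forall>u. (\<lambda>k. (u \<bullet> e' k) *\<^sub>R e' k) sums u"
    proof
      fix u :: "'a hw"
      have "(\<lambda>k. abs ((rep u \<bullet> e k) *\<^sub>R e k)) sums abs (rep u)"
        by (rule bounded_linear.sums[OF abs_bl basis[rule_format]])
      moreover have "abs ((rep u \<bullet> e k) *\<^sub>R e k) = (u \<bullet> e' k) *\<^sub>R e' k" for k
        by (metis e'_def inner_rep rep_abs rep_inject rep_scale)
      ultimately show "(\<lambda>k. (u \<bullet> e' k) *\<^sub>R e' k) sums u" by (simp add: abs_rep)
    qed
  qed
  have bnd: "\<bar>exp (- lam k * r)\<bar> \<le> 1" for k using lp[of k] r by (simp add: mult_nonneg_nonneg less_imp_le)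
  have sm: "summable (\<lambda>k. (exp (- lam k * r) * (v \<bullet> e' k)) *\<^sub>R e' k)"
    by (rule hb.mult_summable[OF hb' bnd])
  have "rep (semigrp e' lam r v) = suminf (\<lambda>k. rep ((exp (- lam k * r) * (v \<bullet> e' k)) *\<^sub>R e' k))"
    unfolding semigrp_def by (rule bounded_linear.suminf[OF rep_bl sm])
  also have "\<dots> = semigrp e lam r (rep v)"
    unfolding semigrp_def by (simp add: e'_def rep_scale rep_abs inner_rep[symmetric])
  finally show ?thesis by (simp add: e'_def)
qed

theorem lemma2p1:
  fixes e :: "nat \<Rightarrow> 'a::{real_inner,complete_space}"
    and lam :: "nat \<Rightarrow> real" and F :: "'a \<Rightarrow> 'a"
    and N n :: nat and K0 K1 R :: real and p0 :: 'a
  assumes orthonormal: "\<forall>j k. e j \<bullet> e k = (if j = k then 1 else 0)"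
    and basis: "\<forall>u. (\<lambda>k. (u \<bullet> e k) *\<^sub>R e k) sums u"
    and lam_pos: "0 < lam 0"
    and lam_simple: "lam 0 < lam 1"
    and lam_mono: "mono lam"
    and lam_unbounded: "filterlim lam at_top sequentially"
    and N_pos: "1 \<le> N"
    and gap: "lam (N - 1) < lam N"
    and K0_pos: "0 < K0" and K1_pos: "0 < K1" and K1_gap: "K1 < lam N"
    and R_pos: "0 < R"
    and F_bounded: "\<forall>u. norm (F u) \<le> K0"
    and F_lipschitz: "\<forall>u v. norm (F u - F v) \<le> K1 * norm (u - v)"
    and F_support: "\<forall>u. R \<le> norm u \<longrightarrow> F u = 0"
    and p0: "p0 \<in> range (Pproj e N)"
  shows "\<exists>p q :: real \<Rightarrow> 'a.
     continuous_on {0..real n} p \<and> continuous_on {0..real n} q \<and>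
     (\<forall>t\<in>{0..real n}. p t \<in> range (Pproj e N) \<and> q t \<in> range (Qproj e N)) \<and>
     (\<forall>s t. 0 \<le> s \<and> s \<le> t \<and> t \<le> real n \<longrightarrow>
        ((\<lambda>\<tau>. semigrp e lam (t - \<tau>) (Pproj e N (F (p \<tau> + q \<tau>))))
            has_integral (p t - semigrp e lam (t - s) (p s))) {s..t} \<and>
        ((\<lambda>\<tau>. semigrp e lam (t - \<tau>) (Qproj e N (F (p \<tau> + q \<tau>))))
            has_integral (q t - semigrp e lam (t - s) (q s))) {s..t}) \<and>
     p (real n) = p0 \<and> q 0 = 0"
proof -
  have lp: "\<And>k. 0 < lam k" using lam_pos lam_mono by (metis le0 monoD order_less_le_trans)
  define e' where "e' = (\<lambda>k. abs (e k) :: 'a hw)"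
  define F' where "F' = (\<lambda>v. abs (F (rep v)) :: 'a hw)"
  have orth': "\<forall>j k. e' j \<bullet> e' k = (if j = k then 1 else 0)"
    using orthonormal by (simp add: e'_def inner_rep[symmetric] rep_abs)
  have basis': "\<forall>u. (\<lambda>k. (u \<bullet> e' k) *\<^sub>R e' k) sums u"
  proof
    fix u :: "'a hw"
    have "(\<lambda>k. abs ((rep u \<bullet> e k) *\<^sub>R e k)) sums abs (rep u)"
      by (rule bounded_linear.sums[OF abs_bl basis[rule_format]])
    moreover have "abs ((rep u \<bullet> e k) *\<^sub>R e k) = (u \<bullet> e' k) *\<^sub>R e' k" for k
      by (metis e'_def inner_rep rep_abs rep_inject rep_scale)
    ultimately show "(\<lambda>k. (u \<bullet> e' k) *\<^sub>R e' k) sums u" by (simp add: abs_rep)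
  qed
  have Fb': "\<forall>u. norm (F' u) \<le> K0" using F_bounded by (simp add: F'_def norm_rep[symmetric] rep_abs)
  have Fl': "\<forall>u v. norm (F' u - F' v) \<le> K1 * norm (u - v)"
    using F_lipschitz by (simp add: F'_def norm_rep[symmetric] rep_abs rep_diff)
  have p0': "abs p0 \<in> range (Pproj e' N)"
  proof -
    obtain u where u: "p0 = Pproj e N u" using p0 by blast
    have "rep (Pproj e' N (abs u)) = rep (abs p0)" by (simp add: e'_def rep_Pproj rep_abs u)
    then have "Pproj e' N (abs u) = abs p0" by (rule rep_inject[THEN iffD1])
    then show ?thesis by (metis rangeI)
  qed
  have ex: "\<exists>p q :: real \<Rightarrow> 'a hw.
     continuous_on {0..real n} p \<and> continuous_on {0..real n} q \<and>
     (\<forall>t\<in>{0..real n}. p t \<in> range (Pproj e' N) \<and> q t \<in> range (Qproj e' N)) \<and>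
     (\<forall>s t. 0 \<le> s \<and> s \<le> t \<and> t \<le> real n \<longrightarrow>
        ((\<lambda>\<tau>. semigrp e' lam (t - \<tau>) (Pproj e' N (F' (p \<tau> + q \<tau>))))
            has_integral (p t - semigrp e' lam (t - s) (p s))) {s..t} \<and>
        ((\<lambda>\<tau>. semigrp e' lam (t - \<tau>) (Qproj e' N (F' (p \<tau> + q \<tau>))))
            has_integral (q t - semigrp e' lam (t - s) (q s))) {s..t}) \<and>
     p (real n) = abs p0 \<and> q 0 = 0" (is "\<exists>p q. ?P p q")
    by (rule lemma2p1_b[OF orth' basis' lam_pos lam_mono N_pos K1_pos Fb' Fl' p0'])
  then obtain p' q' where H: "?P p' q'" by (elim exE)
  note c1 = H[THEN conjunct1]
  note c2 = H[THEN conjunct2, THEN conjunct1]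
  note rg = H[THEN conjunct2, THEN conjunct2, THEN conjunct1]
  note mi = H[THEN conjunct2, THEN conjunct2, THEN conjunct2, THEN conjunct1]
  note en = H[THEN conjunct2, THEN conjunct2, THEN conjunct2, THEN conjunct2]
  define p where "p t = rep (p' t)" for t
  define q where "q t = rep (q' t)" for t
  have RS: "rep (semigrp e' lam r v) = semigrp e lam r (rep v)" if "0 \<le> r" for r v
    unfolding e'_def by (rule rep_semigrp[OF orthonormal basis lp that])
  have RF: "rep (F' (p' \<tau> + q' \<tau>)) = F (p \<tau> + q \<tau>)" for \<tau>
    by (simp add: F'_def rep_abs p_def q_def rep_add)
  show ?thesis
  proof (intro exI conjI ballI allI impI)
    show "continuous_on {0..real n} p" unfolding p_def by (rule bounded_linear.continuous_on[OF rep_bl c1])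
    show "continuous_on {0..real n} q" unfolding q_def by (rule bounded_linear.continuous_on[OF rep_bl c2])
    fix t assume t: "t \<in> {0..real n}"
    have r1: "p' t \<in> range (Pproj e' N)" and r2: "q' t \<in> range (Qproj e' N)" using rg t by auto
    obtain a where a: "p' t = Pproj e' N a" using r1 by (elim rangeE) simp
    obtain b where b: "q' t = Qproj e' N b" using r2 by (elim rangeE) simp
    from a b show "p t \<in> range (Pproj e N)" "q t \<in> range (Qproj e N)"
      by (auto simp: p_def q_def e'_def rep_Pproj rep_Qproj)
  next
    fix s t :: real assume st: "0 \<le> s \<and> s \<le> t \<and> t \<le> real n"
    have h1: "((rep \<circ> (\<lambda>\<tau>. semigrp e' lam (t - \<tau>) (Pproj e' N (F' (p' \<tau> + q' \<tau>)))))
            has_integral rep (p' t - semigrp e' lam (t - s) (p' s))) {s..t}"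
      by (rule has_integral_linear[OF mi[rule_format, OF st, THEN conjunct1] rep_bl])
    have h2: "((rep \<circ> (\<lambda>\<tau>. semigrp e' lam (t - \<tau>) (Qproj e' N (F' (p' \<tau> + q' \<tau>)))))
            has_integral rep (q' t - semigrp e' lam (t - s) (q' s))) {s..t}"
      by (rule has_integral_linear[OF mi[rule_format, OF st, THEN conjunct2] rep_bl])
    have ts: "0 \<le> t - s" using st by simp
    have eqP: "(rep \<circ> (\<lambda>\<tau>. semigrp e' lam (t - \<tau>) (Pproj e' N (F' (p' \<tau> + q' \<tau>))))) \<tau>
        = semigrp e lam (t - \<tau>) (Pproj e N (F (p \<tau> + q \<tau>)))" if "\<tau> \<in> {s..t}" for \<tau>
    proof -
      have "0 \<le> t - \<tau>" using that by simp
      then show ?thesis by (simp add: RS rep_Pproj[of e, folded e'_def] RF)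
    qed
    have eqQ: "(rep \<circ> (\<lambda>\<tau>. semigrp e' lam (t - \<tau>) (Qproj e' N (F' (p' \<tau> + q' \<tau>))))) \<tau>
        = semigrp e lam (t - \<tau>) (Qproj e N (F (p \<tau> + q \<tau>)))" if "\<tau> \<in> {s..t}" for \<tau>
    proof -
      have "0 \<le> t - \<tau>" using that by simp
      then show ?thesis by (simp add: RS rep_Qproj[of e, folded e'_def] RF)
    qed
    have rP: "rep (p' t - semigrp e' lam (t - s) (p' s)) = p t - semigrp e lam (t - s) (p s)"
      using ts by (simp add: rep_diff RS p_def)
    have rQ: "rep (q' t - semigrp e' lam (t - s) (q' s)) = q t - semigrp e lam (t - s) (q s)"
      using ts by (simp add: rep_diff RS q_def)
    show "((\<lambda>\<tau>. semigrp e lam (t - \<tau>) (Pproj e N (F (p \<tau> + q \<tau>))))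
            has_integral (p t - semigrp e lam (t - s) (p s))) {s..t}"
      using h1 unfolding rP by (rule has_integral_eq[rotated]) (rule eqP)
    show "((\<lambda>\<tau>. semigrp e lam (t - \<tau>) (Qproj e N (F (p \<tau> + q \<tau>))))
            has_integral (q t - semigrp e lam (t - s) (q s))) {s..t}"
      using h2 unfolding rQ by (rule has_integral_eq[rotated]) (rule eqQ)
  next
    show "p (real n) = p0" using en[THEN conjunct1] by (simp add: p_def rep_abs)
    show "q 0 = 0" using en[THEN conjunct2] by (simp add: q_def rep_zero)
  qed
qed

end
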